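(* Let $(V,d)$ be a finite metric space with $|V|=n$, let $k\ge1$ be an integer, and let $\mathit{OPT}=\min_{C\subseteq V,\,|C|\le k}\max_{v\in V}d(v,C)$ be the optimal $k$-center radius. Suppose there are $m$ machines, each able to hold at most $c$ points, with $n/m\le c$ and $k\cdot m\le c$. Then the $k$-center problem on $V$ can be solved in two MapReduce rounds with approximation factor $4$, namely by the following procedure: in the first round, partition $V$ arbitrarily into sets $V_1,\dots,V_m$ with $|V_i|\le\lceil n/m\rceil$, and on each machine $i$ in parallel run Gonzalez's algorithm with parameter $k$ on $V_i$, obtaining a center set $C_i$; in the second round, send $C=\bigcup_i C_i$ (which has at most $k\cdot m\le c$ points) to a single machine and run Gonzalez's algorithm with parameter $k$ on $C$, obtaining $C^G$. The output $C^G$ has at most $k$ points and satisfies $\max_{v\in V} d(v,C^G)\le 4\cdot\mathit{OPT}$.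
   Context: Gonzalez's algorithm on a finite point set $S$ with parameter $k$: choose an arbitrary point of $S$ as the first center; then repeatedly choose as a new center a point of $S$ whose distance to the set of already chosen centers is maximum (ties broken arbitrarily), until $k$ centers have been chosen (or all of $S$, if $|S|\le k$). Here $d(v,C)=\min_{x\in C}d(v,x)$. *)

theory Defs
  imports Complex_Main
begin

definition metric_on :: "'a set \<Rightarrow> ('a \<Rightarrow> 'a \<Rightarrow> real) \<Rightarrow> bool" where
  "metric_on V d \<longleftrightarrow>
     (\<forall>x\<in>V. \<forall>y\<in>V. 0 \<le> d x y \<and> (d x y = 0 \<longleftrightarrow> x = y) \<and> d x y = d y x) \<and>
     (\<forall>x\<in>V. \<forall>y\<in>V. \<forall>z\<in>V. d x z \<le> d x y + d y z)"

definition dist_set :: "('a \<Rightarrow> 'a \<Rightarrow> real) \<Rightarrow> 'a \<Rightarrow> 'a set \<Rightarrow> real" where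
  "dist_set d v C = Min ((\<lambda>x. d v x) ` C)"

definition opt_radius :: "'a set \<Rightarrow> ('a \<Rightarrow> 'a \<Rightarrow> real) \<Rightarrow> nat \<Rightarrow> real" where
  "opt_radius V d k = Min {Max ((\<lambda>v. dist_set d v C) ` V) | C. C \<subseteq> V \<and> C \<noteq> {} \<and> card C \<le> k}"

text \<open>Partial runs of Gonzalez's algorithm on S: the list of centers chosen so far, in order.\<close>
inductive gonzalez_steps :: "('a \<Rightarrow> 'a \<Rightarrow> real) \<Rightarrow> 'a set \<Rightarrow> 'a list \<Rightarrow> bool"
  for d S where
  start: "gonzalez_steps d S []"
| first: "x \<in> S \<Longrightarrow> gonzalez_steps d S [x]"
| step: "gonzalez_steps d S cs \<Longrightarrow> cs \<noteq> [] \<Longrightarrow> x \<in> S \<Longrightarrow>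
         (\<forall>y\<in>S. dist_set d y (set cs) \<le> dist_set d x (set cs)) \<Longrightarrow>
         gonzalez_steps d S (cs @ [x])"

definition gonzalez :: "('a \<Rightarrow> 'a \<Rightarrow> real) \<Rightarrow> 'a set \<Rightarrow> nat \<Rightarrow> 'a set \<Rightarrow> bool" where
  "gonzalez d S k C \<longleftrightarrow>
     (\<exists>cs. gonzalez_steps d S cs \<and> length cs = min k (card S) \<and> C = set cs)"

end

theory Submission
  imports Defs
begin

lemma ds_le: "finite C \<Longrightarrow> x \<in> C \<Longrightarrow> dist_set d v C \<le> d v x"
  unfolding dist_set_def by (rule Min_le) auto

lemma ds_in: "finite C \<Longrightarrow> C \<noteq> {} \<Longrightarrow> \<exists>x\<in>C. dist_set d v C = d v x"
proof -
  assume a: "finite C" "C \<noteq> {}"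
  have "Min ((\<lambda>x. d v x) ` C) \<in> (\<lambda>x. d v x) ` C" by (rule Min_in) (use a in auto)
  then show ?thesis unfolding dist_set_def by auto
qed

lemma ds_ge0: "metric_on V d \<Longrightarrow> v \<in> V \<Longrightarrow> C \<subseteq> V \<Longrightarrow> finite C \<Longrightarrow> C \<noteq> {}
  \<Longrightarrow> 0 \<le> dist_set d v C"
proof -
  assume a: "metric_on V d" "v \<in> V" "C \<subseteq> V" "finite C" "C \<noteq> {}"
  obtain x where "x \<in> C" "dist_set d v C = d v x" using ds_in[OF a(4,5)] by blast
  moreover have "x \<in> V" using \<open>x \<in> C\<close> a(3) by blast
  ultimately show ?thesis using a(1) a(2) unfolding metric_on_def by simp
qed

lemma ds_self: "metric_on V d \<Longrightarrow> v \<in> V \<Longrightarrow> finite C \<Longrightarrow> v \<in> C \<Longrightarrow> dist_set d v C \<le> 0"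
proof -
  assume a: "metric_on V d" "v \<in> V" "finite C" "v \<in> C"
  have "d v v = 0" using a(1,2) unfolding metric_on_def by blast
  then show ?thesis using ds_le[OF a(3,4), of d v] by simp
qed

lemma gs_sub: "gonzalez_steps d S cs \<Longrightarrow> set cs \<subseteq> S"
  by (induction rule: gonzalez_steps.induct) auto

lemma gs_sep:
  assumes "gonzalez_steps d S cs" "S \<subseteq> V" "metric_on V d" "t \<ge> 0" "v \<in> S"
    "dist_set d v (set cs) > t"
  shows "distinct cs \<and> (\<forall>a\<in>set cs. \<forall>b\<in>set cs. a \<noteq> b \<longrightarrow> d a b > t)"
  using assms
proof (induction rule: gonzalez_steps.induct)
  case start then show ?case by simp
next
  case (first x) then show ?case by simp
next
  case (step cs x)
  have fin: "finite (set cs)" "set cs \<noteq> {}" using step.hyps(2) by auto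
  have "dist_set d v (set (cs @ [x])) = min (d v x) (dist_set d v (set cs))"
    unfolding dist_set_def using fin by (simp add: Min_insert)
  then have dv: "dist_set d v (set cs) > t" "d v x > t" using step.prems(5) by linarith+
  have IH: "distinct cs \<and> (\<forall>a\<in>set cs. \<forall>b\<in>set cs. a \<noteq> b \<longrightarrow> d a b > t)"
    by (rule step.IH[OF step.prems(1-4) dv(1)])
  have "dist_set d v (set cs) \<le> dist_set d x (set cs)" using step.hyps(4) step.prems(4) by blast
  then have dx: "dist_set d x (set cs) > t" using dv(1) by linarith
  have xV: "x \<in> V" using step.hyps(3) step.prems(1) by blast
  have csV: "set cs \<subseteq> V" using gs_sub[OF step.hyps(1)] step.prems(1) by blast
  have nx: "x \<notin> set cs"
  proof
    assume "x \<in> set cs"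
    then have "dist_set d x (set cs) \<le> 0" by (rule ds_self[OF step.prems(2) xV fin(1)])
    then show False using dx step.prems(3) by linarith
  qed
  have A: "d x a > t" if "a \<in> set cs" for a
    using ds_le[OF fin(1) that, of d x] dx by linarith
  have B: "d a x = d x a" if "a \<in> set cs" for a
  proof -
    have "a \<in> V" using that csV by blast
    then show ?thesis using xV step.prems(2) unfolding metric_on_def by blast
  qed
  have C: "\<forall>a\<in>set (cs @ [x]). \<forall>b\<in>set (cs @ [x]). a \<noteq> b \<longrightarrow> d a b > t"
  proof (intro ballI impI)
    fix a b assume a: "a \<in> set (cs @ [x])" and b: "b \<in> set (cs @ [x])" and ab: "a \<noteq> b"
    show "d a b > t"
    proof (cases "a = x")
      case True then have "b \<in> set cs" using b ab by simp
      then show ?thesis using A True by simp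
    next
      case False then have a': "a \<in> set cs" using a by simp
      show ?thesis
      proof (cases "b = x")
        case True then show ?thesis using A[OF a'] B[OF a'] by simp
      next
        case False then have "b \<in> set cs" using b by simp
        then show ?thesis using IH a' ab by blast
      qed
    qed
  qed
  show ?case using C IH nx by simp
qed

lemma gonz_bound:
  assumes met: "metric_on V d" and fV: "finite V" and SV: "S \<subseteq> V"
    and g: "gonzalez d S k C" and Cs: "Cst \<subseteq> V" "Cst \<noteq> {}" "card Cst \<le> k"
    and cov: "\<forall>u\<in>V. dist_set d u Cst \<le> r" and vS: "v \<in> S"
  shows "dist_set d v C \<le> 2 * r"
proof (rule ccontr)
  assume H: "\<not> ?thesis"
  obtain cs where cs: "gonzalez_steps d S cs" "length cs = min k (card S)" "C = set cs"
    using g unfolding gonzalez_def by auto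
  have fCst: "finite Cst" using Cs fV finite_subset by blast
  have vV: "v \<in> V" using vS SV by auto
  have r0: "0 \<le> r" using cov ds_ge0[OF met vV Cs(1) fCst Cs(2)] vV by force
  have sep: "distinct cs \<and> (\<forall>a\<in>set cs. \<forall>b\<in>set cs. a \<noteq> b \<longrightarrow> d a b > 2*r)"
    using gs_sep[OF cs(1) SV met _ vS, of "2*r"] H r0 cs(3) by auto
  have fS: "finite S" using SV fV finite_subset by blast
  have csS: "set cs \<subseteq> S" using gs_sub[OF cs(1)] .
  have vC: "v \<notin> set cs" using ds_self[OF met vV, of "set cs"] H r0 cs(3) by auto
  have cardcs: "card (set cs) = length cs" using sep distinct_card by blast
  show False
  proof (cases "card S \<le> k")
    case True
    then have "card (set cs) = card S" using cardcs cs(2) by simp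
    then have "set cs = S" using card_subset_eq[OF fS csS] by simp
    then show False using vC vS by simp
  next
    case False
    then have ck: "card (set cs) = k" using cardcs cs(2) by simp
    let ?A = "insert v (set cs)"
    have cA: "card ?A = k + 1" using ck vC by simp
    have AV: "?A \<subseteq> V" using csS SV vV by auto
    have sepA: "\<forall>a\<in>?A. \<forall>b\<in>?A. a \<noteq> b \<longrightarrow> d a b > 2*r"
    proof (intro ballI impI)
      fix a b assume a: "a \<in> ?A" and b: "b \<in> ?A" and ab: "a \<noteq> b"
      have dvc: "\<forall>c\<in>set cs. d v c > 2*r" using ds_le[of "set cs" _ d v] H cs(3) by force
      have sym: "\<forall>c\<in>set cs. d c v = d v c" using csS SV vV met unfolding metric_on_def by auto
      show "d a b > 2*r" using a b ab sep dvc sym by auto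
    qed
    define f where "f p = (SOME z. z \<in> Cst \<and> dist_set d p Cst = d p z)" for p
    have f: "f p \<in> Cst \<and> dist_set d p Cst = d p (f p)" for p
    proof -
      have "\<exists>z. z \<in> Cst \<and> dist_set d p Cst = d p z" using ds_in[OF fCst Cs(2), of d p] by blast
      then show ?thesis unfolding f_def by (rule someI_ex)
    qed
    have "\<not> inj_on f ?A"
    proof
      assume "inj_on f ?A"
      then have "card ?A \<le> card Cst" using card_inj_on_le[of f ?A Cst] f fCst by blast
      then show False using cA Cs(3) by simp
    qed
    then obtain p q where pq: "p \<in> ?A" "q \<in> ?A" "p \<noteq> q" "f p = f q"
      unfolding inj_on_def by blast
    have z: "f p \<in> V" using f Cs(1) by blast
    have "d p q \<le> d p (f p) + d (f p) q" using met pq AV z unfolding metric_on_def by blast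
    also have "d (f p) q = d q (f q)" using met pq AV z unfolding metric_on_def by auto
    also have "d p (f p) + d q (f q) \<le> 2 * r"
    proof -
      have "p \<in> V" "q \<in> V" using pq AV by auto
      then have "dist_set d p Cst \<le> r" "dist_set d q Cst \<le> r" using cov by auto
      then show ?thesis using f[of p] f[of q] by linarith
    qed
    finally show False using sepA pq by force
  qed
qed

lemma gonz_card: "gonzalez d S k C \<Longrightarrow> card C \<le> k"
  unfolding gonzalez_def using card_length by (metis min.bounded_iff)

lemma gonz_sub: "gonzalez d S k C \<Longrightarrow> C \<subseteq> S"
  unfolding gonzalez_def using gs_sub by blast

lemma gonz_ne: "gonzalez d S k C \<Longrightarrow> finite S \<Longrightarrow> S \<noteq> {} \<Longrightarrow> k \<ge> 1 \<Longrightarrow> C \<noteq> {}"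
  unfolding gonzalez_def by (auto simp: card_gt_0_iff Suc_le_eq min_def split: if_splits)

lemma gonz_fin: "gonzalez d S k C \<Longrightarrow> finite C"
  unfolding gonzalez_def by auto

theorem lemma2:
  fixes V :: "'a set" and d :: "'a \<Rightarrow> 'a \<Rightarrow> real"
    and n k m c :: nat
    and P :: "nat \<Rightarrow> 'a set" and Cs :: "nat \<Rightarrow> 'a set" and CG :: "'a set"
  assumes "finite V" and "metric_on V d" and "card V = n"
    and "k \<ge> 1" and "m \<ge> 1"
    and "real n / real m \<le> real c" and "k * m \<le> c"
    and "\<forall>i<m. \<forall>j<m. i \<noteq> j \<longrightarrow> P i \<inter> P j = {}"
    and "(\<Union>i<m. P i) = V"
    and "\<forall>i<m. card (P i) \<le> nat \<lceil>real n / real m\<rceil>"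
    and "\<forall>i<m. gonzalez d (P i) k (Cs i)"
    and "gonzalez d (\<Union>i<m. Cs i) k CG"
  shows "card (\<Union>i<m. Cs i) \<le> k * m \<and> card CG \<le> k \<and>
         (\<forall>v\<in>V. dist_set d v CG \<le> 4 * opt_radius V d k)"
proof (intro conjI)
  have "card (\<Union>i<m. Cs i) \<le> (\<Sum>i<m. card (Cs i))" by (rule card_UN_le) simp
  also have "\<dots> \<le> (\<Sum>i<m. k)" by (rule sum_mono) (use assms(11) gonz_card in blast)
  finally show "card (\<Union>i<m. Cs i) \<le> k * m" by (simp add: mult.commute)
  show "card CG \<le> k" using assms(12) gonz_card by blast
  show "\<forall>v\<in>V. dist_set d v CG \<le> 4 * opt_radius V d k"
  proof
    fix v assume vV: "v \<in> V"
    define F where "F = {C. C \<subseteq> V \<and> C \<noteq> {} \<and> card C \<le> k}"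
    define g where "g C = Max ((\<lambda>v. dist_set d v C) ` V)" for C
    have eq: "{Max ((\<lambda>v. dist_set d v C) ` V) | C. C \<subseteq> V \<and> C \<noteq> {} \<and> card C \<le> k} = g ` F"
      unfolding F_def g_def by blast
    have "F \<subseteq> Pow V" unfolding F_def by blast
    then have fF: "finite F" using assms(1) finite_subset by blast
    have "{v} \<in> F" unfolding F_def using vV assms(4) by auto
    then have neF: "g ` F \<noteq> {}" by auto
    obtain Cst where Cst: "Cst \<in> F" "opt_radius V d k = g Cst"
      using Min_in[OF finite_imageI[OF fF] neF] eq unfolding opt_radius_def by auto
    define r where "r = opt_radius V d k"
    have cov: "\<forall>u\<in>V. dist_set d u Cst \<le> r"
    proof
      fix u assume "u \<in> V"
      then have "dist_set d u Cst \<le> g Cst" unfolding g_def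
        by (intro Max_ge finite_imageI assms(1) imageI)
      then show "dist_set d u Cst \<le> r" unfolding r_def Cst(2) .
    qed
    have CstP: "Cst \<subseteq> V" "Cst \<noteq> {}" "card Cst \<le> k" using Cst(1) unfolding F_def by auto
    obtain i where i: "i < m" "v \<in> P i" using vV assms(9) by auto
    have PV: "P i \<subseteq> V" using i assms(9) by auto
    have gi: "gonzalez d (P i) k (Cs i)" using assms(11) i by auto
    have d1: "dist_set d v (Cs i) \<le> 2 * r"
      using gonz_bound[OF assms(2,1) PV gi CstP cov i(2)] .
    have fP: "finite (P i)" using PV assms(1) finite_subset by blast
    have neC: "Cs i \<noteq> {}" using gonz_ne[OF gi fP _ assms(4)] i by auto
    obtain x where x: "x \<in> Cs i" "dist_set d v (Cs i) = d v x"
      using ds_in[OF gonz_fin[OF gi] neC] by blast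
    define U where "U = (\<Union>i<m. Cs i)"
    have UV: "U \<subseteq> V"
    proof
      fix w assume "w \<in> U"
      then obtain j where j: "j < m" "w \<in> Cs j" unfolding U_def by blast
      have "Cs j \<subseteq> P j" using gonz_sub assms(11) j(1) by blast
      then show "w \<in> V" using j assms(9) by blast
    qed
    have xU: "x \<in> U" unfolding U_def using x i by auto
    have gU: "gonzalez d U k CG" using assms(12) U_def by simp
    have d2: "dist_set d x CG \<le> 2 * r"
      using gonz_bound[OF assms(2,1) UV gU CstP cov xU] .
    have fU: "finite U" using UV assms(1) finite_subset by blast
    have neG: "CG \<noteq> {}" using gonz_ne[OF gU fU _ assms(4)] xU by auto
    obtain y where y: "y \<in> CG" "dist_set d x CG = d x y"
      using ds_in[OF gonz_fin[OF gU] neG] by blast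
    have yV: "y \<in> V" using y gonz_sub[OF gU] UV by auto
    have xV: "x \<in> V" using xU UV by auto
    have "dist_set d v CG \<le> d v y" using ds_le[OF gonz_fin[OF gU] y(1)] .
    also have "\<dots> \<le> d v x + d x y"
    proof -
      have tri: "\<forall>x\<in>V. \<forall>y\<in>V. \<forall>z\<in>V. d x z \<le> d x y + d y z"
        using assms(2) unfolding metric_on_def by (rule conjunct2)
      show ?thesis using tri vV xV yV by simp
    qed
    finally show "dist_set d v CG \<le> 4 * opt_radius V d k" using d1 d2 x y r_def by linarith
  qed
qed

end
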